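(* An FDS $A$ is cancellative, i.e. for all FDSs $B,C$ the equality $AB=AC$ implies $B=C$, if and only if $A$ has a fixpoint (a state $s\in S_A$ with $A(s)=s$).
   Context: A finite dynamical system (FDS) is a function $A:S_A\to S_A$ on a finite set $S_A$ (possibly empty). FDSs are considered up to isomorphism: $A=B$ means that their functional graphs (vertex set $S_A$, one arc $x\to A(x)$ for each $x$) are isomorphic digraphs. The product $AB$ of two FDSs is the function on $S_A\times S_B$ given by $(a,b)\mapsto (A(a),B(b))$. *)

theory Defs
  imports Main
begin

text \<open>A finite dynamical system is represented by a finite state set S together with
  a function f mapping S into S (values of f outside S are irrelevant).\<close>
definition is_fds :: "'a set \<Rightarrow> ('a \<Rightarrow> 'a) \<Rightarrow> bool" where
  "is_fds S f \<longleftrightarrow> finite S \<and> (\<forall>x\<in>S. f x \<in> S)"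

definition fds_iso :: "'a set \<Rightarrow> ('a \<Rightarrow> 'a) \<Rightarrow> 'b set \<Rightarrow> ('b \<Rightarrow> 'b) \<Rightarrow> bool" where
  "fds_iso S f T g \<longleftrightarrow> (\<exists>h. bij_betw h S T \<and> (\<forall>x\<in>S. h (f x) = g (h x)))"

definition fds_prod_set :: "'a set \<Rightarrow> 'b set \<Rightarrow> ('a \<times> 'b) set" where
  "fds_prod_set S T = S \<times> T"

definition fds_prod_fun :: "('a \<Rightarrow> 'a) \<Rightarrow> ('b \<Rightarrow> 'b) \<Rightarrow> ('a \<times> 'b \<Rightarrow> 'a \<times> 'b)" where
  "fds_prod_fun f g = (\<lambda>(a, b). (f a, g b))"

text \<open>Cancellative: for all FDSs B, C, AB = AC implies B = C. Every FDS is isomorphic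
  to one whose state set is a finite set of naturals, so B and C range over those.\<close>
definition cancellative :: "'a set \<Rightarrow> ('a \<Rightarrow> 'a) \<Rightarrow> bool" where
  "cancellative S f \<longleftrightarrow>
     (\<forall>(SB :: nat set) gB (SC :: nat set) gC.
        is_fds SB gB \<longrightarrow> is_fds SC gC \<longrightarrow>
        fds_iso (fds_prod_set S SB) (fds_prod_fun f gB) (fds_prod_set S SC) (fds_prod_fun f gC) \<longrightarrow>
        fds_iso SB gB SC gC)"

end

theory Submission
  imports Defs "HOL-Library.FuncSet"
begin

definition homs :: "'z set \<Rightarrow> ('z\<Rightarrow>'z) \<Rightarrow> 'x set \<Rightarrow> ('x\<Rightarrow>'x) \<Rightarrow> ('z\<Rightarrow>'x) set" where
  "homs Z fz X fx = {h \<in> Z \<rightarrow>\<^sub>E X. \<forall>z\<in>Z. h (fz z) = fx (h z)}"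

definition ihoms :: "'z set \<Rightarrow> ('z\<Rightarrow>'z) \<Rightarrow> 'x set \<Rightarrow> ('x\<Rightarrow>'x) \<Rightarrow> ('z\<Rightarrow>'x) set" where
  "ihoms Z fz X fx = {h \<in> homs Z fz X fx. inj_on h Z}"

lemma finite_homs: "finite Z \<Longrightarrow> finite X \<Longrightarrow> finite (homs Z fz X fx)"
  unfolding homs_def by (rule finite_subset[OF _ finite_PiE[of Z "\<lambda>_. X"]]) auto

lemma finite_ihoms: "finite Z \<Longrightarrow> finite X \<Longrightarrow> finite (ihoms Z fz X fx)"
  unfolding ihoms_def using finite_homs by (rule finite_subset[rotated]) auto

definition Hth :: "'z set \<Rightarrow> ('z\<Rightarrow>'z) \<Rightarrow> ('z\<times>'z) set \<Rightarrow> 'x set \<Rightarrow> ('x\<Rightarrow>'x) \<Rightarrow> ('z\<Rightarrow>'x) set" where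
  "Hth Z fz th X fx = {h \<in> homs Z fz X fx. \<forall>z\<in>Z. \<forall>z'\<in>Z. (h z = h z') = ((z,z') \<in> th)}"

lemma key_quot:
  fixes Z :: "nat set"
  assumes Zf: "is_fds Z gz" and thZ: "th \<subseteq> Z \<times> Z" and thne: "th \<noteq> Id_on Z"
  shows "(\<forall>(W::'x set) gW. Hth Z gz th W gW = {}) \<or>
     (\<exists>(R::nat set) g'. is_fds R g' \<and> card R < card Z \<and>
        (\<forall>(W::'x set) gW. card (Hth Z gz th W gW) = card (ihoms R g' W gW)))"
proof (cases "equiv Z th \<and> (\<forall>z z'. (z,z') \<in> th \<longrightarrow> (gz z, gz z') \<in> th)")
  case False
  have "Hth Z gz th W gW = {}" for W :: "'x set" and gW
  proof (rule ccontr)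
    assume "Hth Z gz th W gW \<noteq> {}"
    then obtain h where h: "h \<in> Hth Z gz th W gW" by blast
    have hZ: "\<forall>z\<in>Z. h (gz z) = gW (h z)" and ker: "\<forall>z\<in>Z. \<forall>z'\<in>Z. (h z = h z') = ((z,z') \<in> th)"
      using h unfolding Hth_def homs_def by auto
    have cl: "\<forall>z\<in>Z. gz z \<in> Z" using Zf unfolding is_fds_def by auto
    have "equiv Z th"
    proof (rule equivI)
      show "th \<subseteq> Z \<times> Z" using thZ .
      show "refl_on Z th" unfolding refl_on_def using thZ ker by blast
      show "sym th" unfolding sym_def
      proof (intro allI impI)
        fix x y assume "(x,y) \<in> th"
        then show "(y,x) \<in> th" using thZ ker by (metis mem_Sigma_iff subsetD)
      qed
      show "trans th" unfolding trans_def
      proof (intro allI impI)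
        fix x y z assume "(x,y) \<in> th" "(y,z) \<in> th"
        then show "(x,z) \<in> th" using thZ ker by (metis mem_Sigma_iff subsetD)
      qed
    qed
    moreover have "\<forall>z z'. (z,z') \<in> th \<longrightarrow> (gz z, gz z') \<in> th"
    proof (intro allI impI)
      fix z z' assume zz: "(z,z') \<in> th"
      then have "z \<in> Z" "z' \<in> Z" using thZ by auto
      then show "(gz z, gz z') \<in> th" using ker hZ zz cl by metis
    qed
    ultimately show False using False by blast
  qed
  then show ?thesis by blast
next
  case True
  then have eq: "equiv Z th" and cg: "\<And>z z'. (z,z') \<in> th \<Longrightarrow> (gz z, gz z') \<in> th" by auto
  have cl: "\<And>z. z\<in>Z \<Longrightarrow> gz z \<in> Z" using Zf unfolding is_fds_def by auto
  have finZ: "finite Z" using Zf unfolding is_fds_def by auto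
  define rep where "rep z = (LEAST w. (z,w) \<in> th)" for z
  have refl: "\<And>z. z \<in> Z \<Longrightarrow> (z,z) \<in> th" using eq unfolding equiv_def refl_on_def by auto
  have sym: "\<And>z z'. (z,z') \<in> th \<Longrightarrow> (z',z) \<in> th" using eq unfolding equiv_def sym_def by auto
  have trans: "\<And>z z' z''. (z,z') \<in> th \<Longrightarrow> (z',z'') \<in> th \<Longrightarrow> (z,z'') \<in> th"
    using eq unfolding equiv_def trans_def by blast
  have rep1: "(z, rep z) \<in> th" if "z \<in> Z" for z
    unfolding rep_def using refl[OF that] by (rule LeastI)
  have repZ: "rep z \<in> Z" if "z \<in> Z" for z using rep1[OF that] thZ by auto
  have repeq: "rep z = rep z'" if "(z,z') \<in> th" for z z'
  proof -
    have "\<And>w. (z,w) \<in> th \<longleftrightarrow> (z',w) \<in> th" using that sym trans by blast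
    then show ?thesis unfolding rep_def by presburger
  qed
  have reprep: "rep (rep z) = rep z" if "z \<in> Z" for z
    using repeq[OF sym[OF rep1[OF that]]] .
  have repiff: "rep z = rep z' \<longleftrightarrow> (z,z') \<in> th" if "z \<in> Z" "z' \<in> Z" for z z'
  proof
    assume "rep z = rep z'"
    then show "(z,z') \<in> th" using rep1[OF that(1)] rep1[OF that(2)] sym trans by metis
  qed (rule repeq)
  define R where "R = rep ` Z"
  define g' where "g' = (\<lambda>z. rep (gz z))"
  have RZ: "R \<subseteq> Z" unfolding R_def using repZ by auto
  have repR: "\<And>r. r \<in> R \<Longrightarrow> rep r = r" unfolding R_def using reprep by auto
  have Rf: "is_fds R g'"
    unfolding is_fds_def R_def g'_def using finZ repZ cl by auto
  have "\<not> inj_on rep Z"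
  proof
    assume inj: "inj_on rep Z"
    have "th \<subseteq> Id_on Z"
    proof
      fix p assume "p \<in> th"
      then obtain z z' where p: "p = (z,z')" "z \<in> Z" "z' \<in> Z" "(z,z') \<in> th" using thZ by auto
      then have "z = z'" using repeq inj unfolding inj_on_def by blast
      then show "p \<in> Id_on Z" using p by auto
    qed
    moreover have "Id_on Z \<subseteq> th" using refl by auto
    ultimately show False using thne by blast
  qed
  then have "card R \<noteq> card Z" unfolding R_def using eq_card_imp_inj_on[OF finZ] by metis
  moreover have "card R \<le> card Z" using card_mono[OF finZ RZ] .
  ultimately have cardR: "card R < card Z" by simp
  have "card (Hth Z gz th W gW) = card (ihoms R g' W gW)" for W :: "'x set" and gW
  proof -
    have "bij_betw (\<lambda>h. restrict h R) (Hth Z gz th W gW) (ihoms R g' W gW)"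
    proof (rule bij_betw_byWitness[where f'="\<lambda>g. \<lambda>z\<in>Z. g (rep z)"])
      show "\<forall>h\<in>Hth Z gz th W gW. (\<lambda>z\<in>Z. restrict h R (rep z)) = h"
      proof
        fix h assume h: "h \<in> Hth Z gz th W gW"
        have ext: "h \<in> extensional Z" using h unfolding Hth_def homs_def by (auto simp: PiE_iff)
        have "h (rep z) = h z" if "z \<in> Z" for z
          using h repZ[OF that] that rep1[OF that] sym unfolding Hth_def by blast
        then show "(\<lambda>z\<in>Z. restrict h R (rep z)) = h"
          using ext repZ unfolding R_def by (auto simp: extensional_def)
      qed
      show "\<forall>g\<in>ihoms R g' W gW. restrict (\<lambda>z\<in>Z. g (rep z)) R = g"
      proof
        fix g assume g: "g \<in> ihoms R g' W gW"
        have ext: "g \<in> extensional R" using g unfolding ihoms_def homs_def by (auto simp: PiE_iff)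
        show "restrict (\<lambda>z\<in>Z. g (rep z)) R = g"
        proof
          fix x show "restrict (\<lambda>z\<in>Z. g (rep z)) R x = g x"
            using ext RZ repR by (cases "x \<in> R") (auto simp: extensional_def)
        qed
      qed
      show "(\<lambda>h. restrict h R) ` Hth Z gz th W gW \<subseteq> ihoms R g' W gW"
      proof
        fix g assume "g \<in> (\<lambda>h. restrict h R) ` Hth Z gz th W gW"
        then obtain h where h: "h \<in> Hth Z gz th W gW" and g: "g = restrict h R" by blast
        have hW: "\<And>z. z \<in> Z \<Longrightarrow> h z \<in> W" and hh: "\<And>z. z\<in>Z \<Longrightarrow> h (gz z) = gW (h z)"
          and ker: "\<And>z z'. z\<in>Z \<Longrightarrow> z'\<in>Z \<Longrightarrow> (h z = h z') = ((z,z') \<in> th)"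
          using h unfolding Hth_def homs_def by auto
        have "g \<in> R \<rightarrow>\<^sub>E W" using g hW RZ by auto
        moreover have "\<forall>r\<in>R. g (g' r) = gW (g r)"
        proof
          fix r assume r: "r \<in> R"
          then have rZ: "r \<in> Z" using RZ by auto
          have "g' r \<in> R" using Rf r unfolding is_fds_def by auto
          then have "g (g' r) = h (rep (gz r))" using g g'_def by simp
          also have "\<dots> = h (gz r)" using ker[OF repZ[OF cl[OF rZ]] cl[OF rZ]] rep1[OF cl[OF rZ]] sym by blast
          also have "\<dots> = gW (g r)" using hh[OF rZ] g r by simp
          finally show "g (g' r) = gW (g r)" .
        qed
        moreover have "inj_on g R"
        proof (rule inj_onI)
          fix r r' assume rr: "r \<in> R" "r' \<in> R" "g r = g r'"
          then have "(r,r') \<in> th" using ker RZ g by auto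
          then have "rep r = rep r'" by (rule repeq)
          then show "r = r'" using repR rr by metis
        qed
        ultimately show "g \<in> ihoms R g' W gW" unfolding ihoms_def homs_def by auto
      qed
      show "(\<lambda>g. \<lambda>z\<in>Z. g (rep z)) ` ihoms R g' W gW \<subseteq> Hth Z gz th W gW"
      proof
        fix h assume "h \<in> (\<lambda>g. \<lambda>z\<in>Z. g (rep z)) ` ihoms R g' W gW"
        then obtain g where g: "g \<in> ihoms R g' W gW" and h: "h = (\<lambda>z\<in>Z. g (rep z))" by blast
        have gW: "\<And>r. r \<in> R \<Longrightarrow> g r \<in> W" and gg: "\<And>r. r\<in>R \<Longrightarrow> g (g' r) = gW (g r)"
          and inj: "inj_on g R"
          using g unfolding ihoms_def homs_def by auto
        have repinR: "\<And>z. z \<in> Z \<Longrightarrow> rep z \<in> R" unfolding R_def by auto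
        have "h \<in> Z \<rightarrow>\<^sub>E W" using h gW repinR by auto
        moreover have "\<forall>z\<in>Z. h (gz z) = gW (h z)"
        proof
          fix z assume z: "z \<in> Z"
          have "(gz z, gz (rep z)) \<in> th" using cg[OF rep1[OF z]] .
          then have "rep (gz z) = rep (gz (rep z))" by (rule repeq)
          then have "h (gz z) = g (g' (rep z))" using h cl[OF z] g'_def by simp
          also have "\<dots> = gW (h z)" using gg[OF repinR[OF z]] h z by simp
          finally show "h (gz z) = gW (h z)" .
        qed
        moreover have "\<forall>z\<in>Z. \<forall>z'\<in>Z. (h z = h z') = ((z,z') \<in> th)"
        proof (intro ballI)
          fix z z' assume zz: "z \<in> Z" "z' \<in> Z"
          have "(h z = h z') = (rep z = rep z')"
            using h zz inj repinR unfolding inj_on_def by auto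
          then show "(h z = h z') = ((z,z') \<in> th)" using repiff[OF zz] by simp
        qed
        ultimately show "h \<in> Hth Z gz th W gW" unfolding Hth_def homs_def by auto
      qed
    qed
    then show ?thesis by (rule bij_betw_same_card)
  qed
  then show ?thesis using Rf cardR by (intro disjI2 exI[of _ R] exI[of _ g']) auto
qed

lemma homs_decomp:
  fixes Z :: "'z set"
  assumes finZ: "finite Z" and finX: "finite X"
  shows "card (homs Z gz X gX) = (\<Sum>th\<in>Pow (Z\<times>Z). card (Hth Z gz th X gX))"
proof -
  have "homs Z gz X gX = (\<Union>th\<in>Pow (Z\<times>Z). Hth Z gz th X gX)"
  proof
    show "homs Z gz X gX \<subseteq> (\<Union>th\<in>Pow (Z\<times>Z). Hth Z gz th X gX)"
    proof
      fix h assume h: "h \<in> homs Z gz X gX"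
      let ?th = "{p \<in> Z\<times>Z. h (fst p) = h (snd p)}"
      have "\<forall>z\<in>Z. \<forall>z'\<in>Z. (h z = h z') = ((z,z') \<in> ?th)"
        by (intro ballI iffI) auto
      then have "h \<in> Hth Z gz ?th X gX" using h unfolding Hth_def by blast
      moreover have "?th \<in> Pow (Z\<times>Z)" by auto
      ultimately show "h \<in> (\<Union>th\<in>Pow (Z\<times>Z). Hth Z gz th X gX)" by (rule UN_I[rotated])
    qed
  qed (auto simp: Hth_def)
  moreover have "card (\<Union>th\<in>Pow (Z\<times>Z). Hth Z gz th X gX) = (\<Sum>th\<in>Pow (Z\<times>Z). card (Hth Z gz th X gX))"
  proof (rule card_UN_disjoint)
    show "finite (Pow (Z \<times> Z))" using finZ by simp
    show "\<forall>i\<in>Pow (Z \<times> Z). finite (Hth Z gz i X gX)"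
      using finite_homs[OF finZ finX] unfolding Hth_def by auto
    show "\<forall>i\<in>Pow (Z \<times> Z). \<forall>j\<in>Pow (Z \<times> Z). i \<noteq> j \<longrightarrow> Hth Z gz i X gX \<inter> Hth Z gz j X gX = {}"
    proof (intro ballI impI)
      fix i j assume ij: "i \<in> Pow (Z \<times> Z)" "j \<in> Pow (Z \<times> Z)" "i \<noteq> j"
      show "Hth Z gz i X gX \<inter> Hth Z gz j X gX = {}"
      proof (rule ccontr)
        assume "Hth Z gz i X gX \<inter> Hth Z gz j X gX \<noteq> {}"
        then obtain h where hi: "h \<in> Hth Z gz i X gX" and hj: "h \<in> Hth Z gz j X gX" by blast
        have Ki: "\<forall>z\<in>Z. \<forall>z'\<in>Z. (h z = h z') = ((z,z') \<in> i)" using hi unfolding Hth_def by blast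
        have Kj: "\<forall>z\<in>Z. \<forall>z'\<in>Z. (h z = h z') = ((z,z') \<in> j)" using hj unfolding Hth_def by blast
        have "i \<subseteq> j"
        proof
          fix p assume p: "p \<in> i"
          then obtain a b where ab: "p = (a,b)" "a \<in> Z" "b \<in> Z" using ij by blast
          then show "p \<in> j" using Ki Kj p by metis
        qed
        moreover have "j \<subseteq> i"
        proof
          fix p assume p: "p \<in> j"
          then obtain a b where ab: "p = (a,b)" "a \<in> Z" "b \<in> Z" using ij by blast
          then show "p \<in> i" using Ki Kj p by metis
        qed
        ultimately have "i = j" by blast
        then show False using ij by simp
      qed
    qed
  qed
  ultimately show ?thesis by simp
qed

lemma Hth_Id: "Hth Z gz (Id_on Z) X gX = ihoms Z gz X gX"
proof -
  have e: "\<And>h. (\<forall>z\<in>Z. \<forall>z'\<in>Z. (h z = h z') = ((z,z') \<in> Id_on Z)) = inj_on h Z"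
    unfolding inj_on_def by auto
  then show ?thesis unfolding Hth_def ihoms_def by (simp only: e)
qed

lemma lovasz_inj:
  fixes X Y :: "'x set"
  assumes fX: "is_fds X gX" and fY: "is_fds Y gY"
    and H: "\<And>Z gz. is_fds (Z::nat set) gz \<Longrightarrow> card (homs Z gz X gX) = card (homs Z gz Y gY)"
  shows "is_fds (Z::nat set) gz \<Longrightarrow> card (ihoms Z gz X gX) = card (ihoms Z gz Y gY)"
proof (induction "card Z" arbitrary: Z gz rule: less_induct)
  case less
  have finZ: "finite Z" using less.prems unfolding is_fds_def by auto
  have finX: "finite X" using fX unfolding is_fds_def by auto
  have finY: "finite Y" using fY unfolding is_fds_def by auto
  have oth: "card (Hth Z gz th X gX) = card (Hth Z gz th Y gY)"
    if th: "th \<in> Pow (Z\<times>Z) - {Id_on Z}" for th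
  proof -
    from key_quot[OF less.prems, of th] th
    have "(\<forall>(W::'x set) gW. Hth Z gz th W gW = {}) \<or>
     (\<exists>(R::nat set) g'. is_fds R g' \<and> card R < card Z \<and>
        (\<forall>(W::'x set) gW. card (Hth Z gz th W gW) = card (ihoms R g' W gW)))" by auto
    then show ?thesis
    proof
      assume "\<forall>(W::'x set) gW. Hth Z gz th W gW = {}"
      then show ?thesis by simp
    next
      assume "\<exists>(R::nat set) g'. is_fds R g' \<and> card R < card Z \<and>
        (\<forall>(W::'x set) gW. card (Hth Z gz th W gW) = card (ihoms R g' W gW))"
      then obtain R :: "nat set" and g' where R: "is_fds R g'" "card R < card Z"
        "\<forall>(W::'x set) gW. card (Hth Z gz th W gW) = card (ihoms R g' W gW)" by blast
      then show ?thesis using less.hyps[OF R(2) R(1)] by simp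
    qed
  qed
  have IdP: "Id_on Z \<in> Pow (Z\<times>Z)" by auto
  have fin: "finite (Pow (Z\<times>Z))" using finZ by simp
  have "card (homs Z gz X gX) = card (ihoms Z gz X gX) + (\<Sum>th\<in>Pow (Z\<times>Z) - {Id_on Z}. card (Hth Z gz th X gX))"
  proof -
    have "card (homs Z gz X gX) = (\<Sum>th\<in>Pow (Z\<times>Z). card (Hth Z gz th X gX))"
      using homs_decomp[OF finZ finX] .
    also have "\<dots> = card (Hth Z gz (Id_on Z) X gX) + (\<Sum>th\<in>Pow (Z\<times>Z) - {Id_on Z}. card (Hth Z gz th X gX))"
      by (rule sum.remove[OF fin IdP])
    finally show ?thesis unfolding Hth_Id .
  qed
  moreover have "card (homs Z gz Y gY) = card (ihoms Z gz Y gY) + (\<Sum>th\<in>Pow (Z\<times>Z) - {Id_on Z}. card (Hth Z gz th Y gY))"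
  proof -
    have "card (homs Z gz Y gY) = (\<Sum>th\<in>Pow (Z\<times>Z). card (Hth Z gz th Y gY))"
      using homs_decomp[OF finZ finY] .
    also have "\<dots> = card (Hth Z gz (Id_on Z) Y gY) + (\<Sum>th\<in>Pow (Z\<times>Z) - {Id_on Z}. card (Hth Z gz th Y gY))"
      by (rule sum.remove[OF fin IdP])
    finally show ?thesis unfolding Hth_Id .
  qed
  moreover have "(\<Sum>th\<in>Pow (Z\<times>Z) - {Id_on Z}. card (Hth Z gz th X gX)) = (\<Sum>th\<in>Pow (Z\<times>Z) - {Id_on Z}. card (Hth Z gz th Y gY))"
    using oth by (rule sum.cong[OF refl])
  ultimately show ?case using H[OF less.prems] by linarith
qed

lemma id_ihom: "is_fds X gX \<Longrightarrow> restrict id X \<in> ihoms X gX X gX"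
  unfolding ihoms_def homs_def is_fds_def by simp

lemma lovasz:
  fixes X Y :: "nat set"
  assumes fX: "is_fds X gX" and fY: "is_fds Y gY"
    and H: "\<And>Z gz. is_fds (Z::nat set) gz \<Longrightarrow> card (homs Z gz X gX) = card (homs Z gz Y gY)"
  shows "fds_iso X gX Y gY"
proof -
  have finX: "finite X" using fX unfolding is_fds_def by auto
  have finY: "finite Y" using fY unfolding is_fds_def by auto
  have e1: "card (ihoms X gX X gX) = card (ihoms X gX Y gY)" using lovasz_inj[OF fX fY H fX] .
  have e2: "card (ihoms Y gY X gX) = card (ihoms Y gY Y gY)" using lovasz_inj[OF fX fY H fY] .
  have "ihoms X gX X gX \<noteq> {}" using id_ihom[OF fX] by blast
  then have "card (ihoms X gX X gX) \<noteq> 0"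
    using finite_ihoms[OF finX finX] by simp
  then have "ihoms X gX Y gY \<noteq> {}" using e1 by auto
  then obtain h1 where h1: "h1 \<in> ihoms X gX Y gY" by blast
  have "ihoms Y gY Y gY \<noteq> {}" using id_ihom[OF fY] by blast
  then have "card (ihoms Y gY Y gY) \<noteq> 0"
    using finite_ihoms[OF finY finY] by simp
  then have "ihoms Y gY X gX \<noteq> {}" using e2 by auto
  then obtain h2 where h2: "h2 \<in> ihoms Y gY X gX" by blast
  have i1: "inj_on h1 X" "h1 ` X \<subseteq> Y" "\<forall>x\<in>X. h1 (gX x) = gY (h1 x)"
    using h1 unfolding ihoms_def homs_def by auto
  have i2: "inj_on h2 Y" "h2 ` Y \<subseteq> X" using h2 unfolding ihoms_def homs_def by auto
  have c1: "card X \<le> card Y" using card_inj_on_le[OF i1(1) i1(2) finY] .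
  have c2: "card Y \<le> card X" using card_inj_on_le[OF i2(1) i2(2) finX] .
  have "card (h1 ` X) = card Y" using c1 c2 card_image[OF i1(1)] by simp
  then have "h1 ` X = Y" using card_subset_eq[OF finY i1(2)] by simp
  then have "bij_betw h1 X Y" using i1(1) unfolding bij_betw_def by simp
  then show ?thesis unfolding fds_iso_def using i1(3) by (intro exI[of _ h1]) simp
qed

lemma homs_prod:
  assumes Zf: "is_fds Z gz"
  shows "card (homs Z gz (S \<times> T) (fds_prod_fun f g)) = card (homs Z gz S f) * card (homs Z gz T g)"
proof -
  have cl: "\<And>z. z \<in> Z \<Longrightarrow> gz z \<in> Z" using Zf unfolding is_fds_def by auto
  have "bij_betw (\<lambda>h. (\<lambda>z\<in>Z. fst (h z), \<lambda>z\<in>Z. snd (h z)))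
          (homs Z gz (S \<times> T) (fds_prod_fun f g)) (homs Z gz S f \<times> homs Z gz T g)"
  proof (rule bij_betw_byWitness[where f'="\<lambda>(h1,h2). \<lambda>z\<in>Z. (h1 z, h2 z)"])
    show "\<forall>h\<in>homs Z gz (S \<times> T) (fds_prod_fun f g).
        (\<lambda>(h1, h2). \<lambda>z\<in>Z. (h1 z, h2 z)) (\<lambda>z\<in>Z. fst (h z), \<lambda>z\<in>Z. snd (h z)) = h"
    proof
      fix h assume "h \<in> homs Z gz (S \<times> T) (fds_prod_fun f g)"
      then have "h \<in> extensional Z" unfolding homs_def by (auto simp: PiE_iff)
      then show "(\<lambda>(h1, h2). \<lambda>z\<in>Z. (h1 z, h2 z)) (\<lambda>z\<in>Z. fst (h z), \<lambda>z\<in>Z. snd (h z)) = h"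
        by (auto simp: extensional_def fun_eq_iff)
    qed
    show "\<forall>p\<in>homs Z gz S f \<times> homs Z gz T g.
       (\<lambda>h. (\<lambda>z\<in>Z. fst (h z), \<lambda>z\<in>Z. snd (h z))) ((\<lambda>(h1, h2). \<lambda>z\<in>Z. (h1 z, h2 z)) p) = p"
    proof
      fix p assume "p \<in> homs Z gz S f \<times> homs Z gz T g"
      then obtain h1 h2 where p: "p = (h1,h2)" "h1 \<in> extensional Z" "h2 \<in> extensional Z"
        unfolding homs_def by (auto simp: PiE_iff)
      then show "(\<lambda>h. (\<lambda>z\<in>Z. fst (h z), \<lambda>z\<in>Z. snd (h z))) ((\<lambda>(h1, h2). \<lambda>z\<in>Z. (h1 z, h2 z)) p) = p"
        by (auto simp: extensional_def fun_eq_iff)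
    qed
    show "(\<lambda>h. (\<lambda>z\<in>Z. fst (h z), \<lambda>z\<in>Z. snd (h z))) ` homs Z gz (S \<times> T) (fds_prod_fun f g)
        \<subseteq> homs Z gz S f \<times> homs Z gz T g"
    proof
      fix q assume "q \<in> (\<lambda>h. (\<lambda>z\<in>Z. fst (h z), \<lambda>z\<in>Z. snd (h z))) ` homs Z gz (S \<times> T) (fds_prod_fun f g)"
      then obtain h where h: "h \<in> homs Z gz (S \<times> T) (fds_prod_fun f g)"
        and q: "q = (\<lambda>z\<in>Z. fst (h z), \<lambda>z\<in>Z. snd (h z))" by blast
      have hS: "\<And>z. z \<in> Z \<Longrightarrow> h z \<in> S \<times> T" and hh: "\<And>z. z \<in> Z \<Longrightarrow> h (gz z) = fds_prod_fun f g (h z)"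
        using h unfolding homs_def by auto
      have hh2: "\<And>z. z \<in> Z \<Longrightarrow> fst (h (gz z)) = f (fst (h z)) \<and> snd (h (gz z)) = g (snd (h z))"
        using hh unfolding fds_prod_fun_def by (simp add: split_beta)
      have "(\<lambda>z\<in>Z. fst (h z)) \<in> homs Z gz S f"
        unfolding homs_def using hS hh2 cl by (auto simp: mem_Times_iff)
      moreover have "(\<lambda>z\<in>Z. snd (h z)) \<in> homs Z gz T g"
        unfolding homs_def using hS hh2 cl by (auto simp: mem_Times_iff)
      ultimately show "q \<in> homs Z gz S f \<times> homs Z gz T g" using q by simp
    qed
    show "(\<lambda>(h1, h2). \<lambda>z\<in>Z. (h1 z, h2 z)) ` (homs Z gz S f \<times> homs Z gz T g)
        \<subseteq> homs Z gz (S \<times> T) (fds_prod_fun f g)"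
    proof
      fix h assume "h \<in> (\<lambda>(h1, h2). \<lambda>z\<in>Z. (h1 z, h2 z)) ` (homs Z gz S f \<times> homs Z gz T g)"
      then obtain h1 h2 where h1: "h1 \<in> homs Z gz S f" and h2: "h2 \<in> homs Z gz T g"
        and h: "h = (\<lambda>z\<in>Z. (h1 z, h2 z))" by auto
      show "h \<in> homs Z gz (S \<times> T) (fds_prod_fun f g)"
        using h1 h2 cl unfolding h homs_def fds_prod_fun_def by auto
    qed
  qed
  then have "card (homs Z gz (S \<times> T) (fds_prod_fun f g)) = card (homs Z gz S f \<times> homs Z gz T g)"
    by (rule bij_betw_same_card)
  then show ?thesis by (simp add: card_cartesian_product)
qed

lemma iso_sym:
  assumes cl: "\<forall>x\<in>X. fx x \<in> X" and iso: "fds_iso X fx Y fy"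
  shows "fds_iso Y fy X fx"
proof -
  obtain h where h: "bij_betw h X Y" "\<forall>x\<in>X. h (fx x) = fy (h x)" using iso unfolding fds_iso_def by blast
  have "bij_betw (inv_into X h) Y X" using bij_betw_inv_into[OF h(1)] .
  moreover have "\<forall>y\<in>Y. inv_into X h (fy y) = fx (inv_into X h y)"
  proof
    fix y assume y: "y \<in> Y"
    let ?x = "inv_into X h y"
    have x: "?x \<in> X" "h ?x = y" using y h(1) by (auto simp: bij_betw_def inv_into_into f_inv_into_f)
    have "fy y = h (fx ?x)" using h(2) x by simp
    then show "inv_into X h (fy y) = fx ?x"
      using cl x h(1) by (simp add: bij_betw_def inv_into_f_f)
  qed
  ultimately show ?thesis unfolding fds_iso_def by blast
qed

lemma iso_homs_le:
  assumes Zf: "is_fds Z gz" and finY: "finite Y" and iso: "fds_iso X fx Y fy"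
  shows "card (homs Z gz X fx) \<le> card (homs Z gz Y fy)"
proof -
  obtain p where p: "bij_betw p X Y" "\<forall>x\<in>X. p (fx x) = fy (p x)" using iso unfolding fds_iso_def by blast
  have finZ: "finite Z" using Zf unfolding is_fds_def by auto
  have cl: "\<And>z. z \<in> Z \<Longrightarrow> gz z \<in> Z" using Zf unfolding is_fds_def by auto
  show ?thesis
  proof (rule card_inj_on_le[OF _ _ finite_homs[OF finZ finY]])
    show "inj_on (\<lambda>h. \<lambda>z\<in>Z. p (h z)) (homs Z gz X fx)"
    proof (rule inj_onI)
      fix h h' assume h: "h \<in> homs Z gz X fx" and h': "h' \<in> homs Z gz X fx"
        and eq: "(\<lambda>z\<in>Z. p (h z)) = (\<lambda>z\<in>Z. p (h' z))"
      have hx: "h \<in> Z \<rightarrow>\<^sub>E X" "h' \<in> Z \<rightarrow>\<^sub>E X" using h h' unfolding homs_def by auto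
      show "h = h'"
      proof (rule extensionalityI[of _ Z])
        show "h \<in> extensional Z" "h' \<in> extensional Z" using hx by (auto simp: PiE_iff)
        fix z assume z: "z \<in> Z"
        have "p (h z) = p (h' z)" using fun_cong[OF eq, of z] z by simp
        then show "h z = h' z" using p(1) hx z unfolding bij_betw_def inj_on_def by (auto simp: PiE_iff)
      qed
    qed
    show "(\<lambda>h. \<lambda>z\<in>Z. p (h z)) ` homs Z gz X fx \<subseteq> homs Z gz Y fy"
    proof
      fix k assume "k \<in> (\<lambda>h. \<lambda>z\<in>Z. p (h z)) ` homs Z gz X fx"
      then obtain h where h: "h \<in> homs Z gz X fx" and k: "k = (\<lambda>z\<in>Z. p (h z))" by blast
      have hx: "\<And>z. z \<in> Z \<Longrightarrow> h z \<in> X" and hh: "\<And>z. z \<in> Z \<Longrightarrow> h (gz z) = fx (h z)"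
        using h unfolding homs_def by auto
      have "\<And>z. z \<in> Z \<Longrightarrow> p (h z) \<in> Y" using hx p(1) unfolding bij_betw_def by auto
      moreover have "\<And>z. z \<in> Z \<Longrightarrow> p (h (gz z)) = fy (p (h z))" using hh hx p(2) by simp
      ultimately show "k \<in> homs Z gz Y fy" unfolding k homs_def using cl by auto
    qed
  qed
qed

lemma canc_if_fix:
  assumes A: "is_fds S f" and s: "s \<in> S" "f s = s"
  shows "cancellative S f"
  unfolding cancellative_def
proof (intro allI impI)
  fix SB :: "nat set" and gB and SC :: "nat set" and gC
  assume B: "is_fds SB gB" and C: "is_fds SC gC"
    and iso: "fds_iso (fds_prod_set S SB) (fds_prod_fun f gB) (fds_prod_set S SC) (fds_prod_fun f gC)"
  have finS: "finite S" using A unfolding is_fds_def by auto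
  have finB: "finite SB" using B unfolding is_fds_def by auto
  have finC: "finite SC" using C unfolding is_fds_def by auto
  have clB: "\<forall>x\<in>S \<times> SB. fds_prod_fun f gB x \<in> S \<times> SB"
    using A B unfolding is_fds_def fds_prod_fun_def by auto
  have iso1: "fds_iso (S \<times> SB) (fds_prod_fun f gB) (S \<times> SC) (fds_prod_fun f gC)"
    using iso unfolding fds_prod_set_def .
  have iso2: "fds_iso (S \<times> SC) (fds_prod_fun f gC) (S \<times> SB) (fds_prod_fun f gB)"
    using iso_sym[OF clB iso1] .
  show "fds_iso SB gB SC gC"
  proof (rule lovasz[OF B C])
    fix Z :: "nat set" and gz assume Zf: "is_fds Z gz"
    have finZ: "finite Z" using Zf unfolding is_fds_def by auto
    have cl: "\<And>z. z \<in> Z \<Longrightarrow> gz z \<in> Z" using Zf unfolding is_fds_def by auto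
    have "card (homs Z gz (S \<times> SB) (fds_prod_fun f gB)) = card (homs Z gz (S \<times> SC) (fds_prod_fun f gC))"
      using iso_homs_le[OF Zf _ iso1] iso_homs_le[OF Zf _ iso2] finS finB finC by (meson antisym finite_SigmaI)
    then have eq: "card (homs Z gz S f) * card (homs Z gz SB gB) = card (homs Z gz S f) * card (homs Z gz SC gC)"
      using homs_prod[OF Zf] by metis
    have "(\<lambda>z\<in>Z. s) \<in> homs Z gz S f" unfolding homs_def using s cl by auto
    then have "card (homs Z gz S f) \<noteq> 0" using finite_homs[OF finZ finS] by (metis card_0_eq empty_iff)
    then show "card (homs Z gz SB gB) = card (homs Z gz SC gC)" using eq by simp
  qed
qed

definition fixc :: "'b set \<Rightarrow> ('b\<Rightarrow>'b) \<Rightarrow> nat" where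
  "fixc B g = card {b\<in>B. g b = b}"

definition twist :: "'a set \<Rightarrow> ('a\<Rightarrow>'a) \<Rightarrow> 'b set \<Rightarrow> ('b\<Rightarrow>'b) \<Rightarrow> 'c set \<Rightarrow> ('c\<Rightarrow>'c) \<Rightarrow> ('a\<Rightarrow>'b\<Rightarrow>'c) \<Rightarrow> bool" where
  "twist U f B gB C gC h \<longleftrightarrow> (\<forall>a\<in>U. bij_betw (h a) B C \<and> (\<forall>b\<in>B. h (f a) (gB b) = gC (h a b)))"

lemma twist_iso:
  assumes tw: "twist U f B gB C gC h"
  shows "fds_iso (U \<times> B) (fds_prod_fun f gB) (U \<times> C) (fds_prod_fun f gC)"
proof -
  have bij: "\<And>a. a \<in> U \<Longrightarrow> bij_betw (h a) B C" and eq: "\<And>a b. a \<in> U \<Longrightarrow> b \<in> B \<Longrightarrow> h (f a) (gB b) = gC (h a b)"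
    using tw unfolding twist_def by auto
  define k where "k = (\<lambda>(a,b). (a, h a b))"
  have "inj_on k (U \<times> B)"
  proof (rule inj_onI)
    fix p q assume p: "p \<in> U \<times> B" and q: "q \<in> U \<times> B" and e: "k p = k q"
    obtain a b where ab: "p = (a,b)" by (cases p)
    obtain a' b' where ab': "q = (a',b')" by (cases q)
    have "a = a'" "h a b = h a b'" using e ab ab' unfolding k_def by auto
    moreover have "inj_on (h a) B" using bij[of a] p ab unfolding bij_betw_def by auto
    ultimately show "p = q" using p q ab ab' unfolding inj_on_def by auto
  qed
  moreover have "k ` (U \<times> B) = U \<times> C"
  proof
    show "k ` (U \<times> B) \<subseteq> U \<times> C" using bij unfolding k_def bij_betw_def by auto
    show "U \<times> C \<subseteq> k ` (U \<times> B)"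
    proof
      fix p assume p: "p \<in> U \<times> C"
      obtain a c where ac: "p = (a,c)" "a \<in> U" "c \<in> C" using p by auto
      then obtain b where "b \<in> B" "c = h a b" using bij[of a] unfolding bij_betw_def by auto
      then show "p \<in> k ` (U \<times> B)" using ac unfolding k_def by force
    qed
  qed
  moreover have "\<forall>x\<in>U \<times> B. k (fds_prod_fun f gB x) = fds_prod_fun f gC (k x)"
    using eq unfolding k_def fds_prod_fun_def by auto
  ultimately show ?thesis unfolding fds_iso_def bij_betw_def by blast
qed

lemma iso_fixc:
  assumes B: "is_fds B gB" and iso: "fds_iso B gB C gC"
  shows "fixc B gB = fixc C gC"
proof -
  obtain p where p: "bij_betw p B C" "\<forall>x\<in>B. p (gB x) = gC (p x)" using iso unfolding fds_iso_def by blast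
  have cl: "\<And>b. b \<in> B \<Longrightarrow> gB b \<in> B" using B unfolding is_fds_def by auto
  have inj: "inj_on p B" using p(1) unfolding bij_betw_def by auto
  have e1: "p ` {b\<in>B. gB b = b} = {c\<in>C. gC c = c}"
  proof
    show "p ` {b\<in>B. gB b = b} \<subseteq> {c\<in>C. gC c = c}" using p unfolding bij_betw_def by auto
    show "{c\<in>C. gC c = c} \<subseteq> p ` {b\<in>B. gB b = b}"
    proof
      fix c assume c: "c \<in> {c\<in>C. gC c = c}"
      then obtain b where b: "b \<in> B" "c = p b" using p(1) unfolding bij_betw_def by auto
      have "p (gB b) = p b" using p(2) b c by auto
      then have "gB b = b" using inj cl[OF b(1)] b(1) unfolding inj_on_def by blast
      then show "c \<in> p ` {b\<in>B. gB b = b}" using b by auto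
    qed
  qed
  have e2: "inj_on p {b\<in>B. gB b = b}" using inj by (rule inj_on_subset) auto
  show ?thesis using card_image[OF e2] unfolding fixc_def e1 by simp
qed

lemma twist_compose:
  assumes tw: "twist U f B gB C gC h" and eB: "bij_betw eB B B'" and eC: "bij_betw eC C C'"
    and clB: "\<And>b. b \<in> B \<Longrightarrow> gB b \<in> B" and clC: "\<And>c. c \<in> C \<Longrightarrow> gC c \<in> C"
  shows "twist U f B' (\<lambda>x. eB (gB (inv_into B eB x))) C' (\<lambda>x. eC (gC (inv_into C eC x)))
            (\<lambda>a x. eC (h a (inv_into B eB x)))"
  unfolding twist_def
proof (intro ballI conjI)
  fix a assume a: "a \<in> U"
  have bij: "bij_betw (h a) B C" and eq: "\<And>b. b \<in> B \<Longrightarrow> h (f a) (gB b) = gC (h a b)"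
    using tw a unfolding twist_def by auto
  have "bij_betw (eC \<circ> (h a \<circ> inv_into B eB)) B' C'"
    by (rule bij_betw_trans[OF bij_betw_trans[OF bij_betw_inv_into[OF eB] bij] eC])
  then show "bij_betw (\<lambda>x. eC (h a (inv_into B eB x))) B' C'" by (simp add: comp_def)
  fix x assume x: "x \<in> B'"
  define b where "b = inv_into B eB x"
  have b: "b \<in> B" "eB b = x" using x eB unfolding b_def bij_betw_def by (auto simp: inv_into_into f_inv_into_f)
  have i1: "inv_into B eB (eB (gB b)) = gB b" using eB clB[OF b(1)] unfolding bij_betw_def by (simp add: inv_into_f_f)
  have hb: "h a b \<in> C" using bij b(1) unfolding bij_betw_def by auto
  have i2: "inv_into C eC (eC (h a b)) = h a b" using eC hb unfolding bij_betw_def by (simp add: inv_into_f_f)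
  show "eC (h (f a) (inv_into B eB (eB (gB (inv_into B eB x))))) = eC (gC (inv_into C eC (eC (h a (inv_into B eB x)))))"
    using i1 i2 eq[OF b(1)] unfolding b_def[symmetric] by simp
qed

lemma transport_fds:
  assumes B: "is_fds B g" and e: "bij_betw e B B'"
  shows "is_fds B' (\<lambda>x. e (g (inv_into B e x)))" "fds_iso B g B' (\<lambda>x. e (g (inv_into B e x)))"
proof -
  have cl: "\<And>b. b \<in> B \<Longrightarrow> g b \<in> B" using B unfolding is_fds_def by auto
  have fin: "finite B" using B unfolding is_fds_def by auto
  show "is_fds B' (\<lambda>x. e (g (inv_into B e x)))"
    unfolding is_fds_def using e fin cl by (auto simp: bij_betw_def inv_into_into)
  show "fds_iso B g B' (\<lambda>x. e (g (inv_into B e x)))"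
    unfolding fds_iso_def using e by (intro exI[of _ e]) (auto simp: bij_betw_def inv_into_f_f)
qed

lemma twist_to_nat:
  assumes tw: "twist U f B gB C gC h" and B: "is_fds B gB" and C: "is_fds C gC"
  shows "\<exists>(B'::nat set) gB' (C'::nat set) gC' h'. is_fds B' gB' \<and> is_fds C' gC' \<and>
     twist U f B' gB' C' gC' h' \<and> fixc B' gB' = fixc B gB \<and> fixc C' gC' = fixc C gC"
proof -
  have finB: "finite B" using B unfolding is_fds_def by auto
  have finC: "finite C" using C unfolding is_fds_def by auto
  obtain eB where eB: "bij_betw eB B {0..<card B}" using ex_bij_betw_finite_nat[OF finB] by blast
  obtain eC where eC: "bij_betw eC C {0..<card C}" using ex_bij_betw_finite_nat[OF finC] by blast
  have clB: "\<And>b. b \<in> B \<Longrightarrow> gB b \<in> B" using B unfolding is_fds_def by auto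
  have clC: "\<And>b. b \<in> C \<Longrightarrow> gC b \<in> C" using C unfolding is_fds_def by auto
  note tB = transport_fds[OF B eB] and tC = transport_fds[OF C eC]
  show ?thesis
    apply (rule exI[of _ "{0..<card B}"], rule exI[of _ "\<lambda>x. eB (gB (inv_into B eB x))"])
    apply (rule exI[of _ "{0..<card C}"], rule exI[of _ "\<lambda>x. eC (gC (inv_into C eC x))"])
    apply (rule exI[of _ "\<lambda>a x. eC (h a (inv_into B eB x))"])
    using tB tC twist_compose[OF tw eB eC clB clC] iso_fixc[OF B tB(2)] iso_fixc[OF C tC(2)]
    by simp
qed

definition spS :: "'p set \<Rightarrow> 'q set \<Rightarrow> 'r set \<Rightarrow> 's set \<Rightarrow> (('p\<times>'q) + ('r\<times>'s)) set" where
  "spS P1 P2 Q1 Q2 = Inl ` (P1 \<times> P2) \<union> Inr ` (Q1 \<times> Q2)"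

definition spF :: "('p\<Rightarrow>'p) \<Rightarrow> ('q\<Rightarrow>'q) \<Rightarrow> ('r\<Rightarrow>'r) \<Rightarrow> ('s\<Rightarrow>'s) \<Rightarrow> (('p\<times>'q) + ('r\<times>'s)) \<Rightarrow> (('p\<times>'q) + ('r\<times>'s))" where
  "spF p1 p2 q1 q2 = case_sum (\<lambda>(x,y). Inl (p1 x, p2 y)) (\<lambda>(x,y). Inr (q1 x, q2 y))"

lemma spF_simps[simp]: "spF p1 p2 q1 q2 (Inl (x,y)) = Inl (p1 x, p2 y)" "spF p1 p2 q1 q2 (Inr (x,y)) = Inr (q1 x, q2 y)"
  unfolding spF_def by auto

lemma sp_fds:
  assumes "is_fds P1 p1" "is_fds P2 p2" "is_fds Q1 q1" "is_fds Q2 q2"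
  shows "is_fds (spS P1 P2 Q1 Q2) (spF p1 p2 q1 q2)"
  using assms unfolding is_fds_def spS_def spF_def by auto

lemma sp_fixc:
  fixes P1 :: "'p set" and P2 :: "'q set" and Q1 :: "'r set" and Q2 :: "'s set"
  assumes "finite P1" "finite P2" "finite Q1" "finite Q2"
  shows "fixc (spS P1 P2 Q1 Q2) (spF p1 p2 q1 q2) = fixc P1 p1 * fixc P2 p2 + fixc Q1 q1 * fixc Q2 q2"
proof -
  have e: "{v \<in> spS P1 P2 Q1 Q2. spF p1 p2 q1 q2 v = v} =
      Inl ` ({x\<in>P1. p1 x = x} \<times> {y\<in>P2. p2 y = y}) \<union> Inr ` ({x\<in>Q1. q1 x = x} \<times> {y\<in>Q2. q2 y = y})"
    unfolding spS_def spF_def by auto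
  have f1: "finite (Inl ` ({x\<in>P1. p1 x = x} \<times> {y\<in>P2. p2 y = y}) :: (('p\<times>'q) + ('r\<times>'s)) set)"
    using assms by auto
  have f2: "finite (Inr ` ({x\<in>Q1. q1 x = x} \<times> {y\<in>Q2. q2 y = y}) :: (('p\<times>'q) + ('r\<times>'s)) set)"
    using assms by auto
  have d: "Inl ` ({x\<in>P1. p1 x = x} \<times> {y\<in>P2. p2 y = y}) \<inter> Inr ` ({x\<in>Q1. q1 x = x} \<times> {y\<in>Q2. q2 y = y}) = ({} :: (('p\<times>'q) + ('r\<times>'s)) set)"
    by auto
  have c1: "card (Inl ` ({x\<in>P1. p1 x = x} \<times> {y\<in>P2. p2 y = y}) :: (('p\<times>'q) + ('r\<times>'s)) set)
     = card {x\<in>P1. p1 x = x} * card {y\<in>P2. p2 y = y}"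
    by (simp add: card_image card_cartesian_product)
  have c2: "card (Inr ` ({x\<in>Q1. q1 x = x} \<times> {y\<in>Q2. q2 y = y}) :: (('p\<times>'q) + ('r\<times>'s)) set)
     = card {x\<in>Q1. q1 x = x} * card {y\<in>Q2. q2 y = y}"
    by (simp add: card_image card_cartesian_product)
  show ?thesis unfolding fixc_def e using card_Un_disjoint[OF f1 f2 d] c1 c2 by simp
qed

lemma nat_ineq:
  fixes b1 c1 b2 c2 :: nat
  assumes "b1 \<noteq> c1" "b2 \<noteq> c2"
  shows "b1 * b2 + c1 * c2 \<noteq> b1 * c2 + c1 * b2"
proof
  assume e: "b1 * b2 + c1 * c2 = b1 * c2 + c1 * b2"
  have "(int b1 - int c1) * (int b2 - int c2) = int (b1 * b2 + c1 * c2) - int (b1 * c2 + c1 * b2)"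
    by (simp add: algebra_simps)
  also have "\<dots> = 0" using e by simp
  finally show False using assms by simp
qed

lemma combine:
  fixes B1 C1 B2 C2 :: "nat set"
  assumes tw1: "twist U1 f B1 gB1 C1 gC1 h1" and tw2: "twist U2 f B2 gB2 C2 gC2 h2"
    and cl1: "\<And>a. a \<in> U1 \<Longrightarrow> f a \<in> U1" and cl2: "\<And>a. a \<in> U2 \<Longrightarrow> f a \<in> U2"
    and disj: "U1 \<inter> U2 = {}"
    and fB1: "is_fds B1 gB1" and fC1: "is_fds C1 gC1" and fB2: "is_fds B2 gB2" and fC2: "is_fds C2 gC2"
  shows "twist (U1 \<union> U2) f (spS B1 B2 C1 C2) (spF gB1 gB2 gC1 gC2) (spS B1 C2 C1 B2) (spF gB1 gC2 gC1 gB2)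
     (\<lambda>a. if a \<in> U1 then case_sum (\<lambda>(x,y). Inr (h1 a x, y)) (\<lambda>(x,y). Inl (inv_into B1 (h1 a) x, y))
          else case_sum (\<lambda>(x,y). Inl (x, h2 a y)) (\<lambda>(x,y). Inr (x, inv_into B2 (h2 a) y)))"
  unfolding twist_def
proof (intro ballI conjI)
  fix a assume a: "a \<in> U1 \<union> U2"
  show "bij_betw (if a \<in> U1 then case_sum (\<lambda>(x,y). Inr (h1 a x, y)) (\<lambda>(x,y). Inl (inv_into B1 (h1 a) x, y))
          else case_sum (\<lambda>(x,y). Inl (x, h2 a y)) (\<lambda>(x,y). Inr (x, inv_into B2 (h2 a) y)))
      (spS B1 B2 C1 C2) (spS B1 C2 C1 B2)"
  proof (cases "a \<in> U1")
    case True
    have bij: "bij_betw (h1 a) B1 C1" using tw1 True unfolding twist_def by auto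
    have i1: "\<And>x. x \<in> B1 \<Longrightarrow> h1 a x \<in> C1" "\<And>x. x \<in> B1 \<Longrightarrow> inv_into B1 (h1 a) (h1 a x) = x"
      using bij unfolding bij_betw_def by (auto simp: inv_into_f_f)
    have i2: "\<And>y. y \<in> C1 \<Longrightarrow> inv_into B1 (h1 a) y \<in> B1" "\<And>y. y \<in> C1 \<Longrightarrow> h1 a (inv_into B1 (h1 a) y) = y"
      using bij unfolding bij_betw_def by (auto simp: inv_into_into f_inv_into_f)
    let ?k = "case_sum (\<lambda>(x,y). Inr (h1 a x, y)) (\<lambda>(x,y). Inl (inv_into B1 (h1 a) x, y))
        :: (nat\<times>nat) + (nat\<times>nat) \<Rightarrow> (nat\<times>nat) + (nat\<times>nat)"
    have "bij_betw ?k (spS B1 B2 C1 C2) (spS B1 C2 C1 B2)"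
    proof (rule bij_betw_byWitness[where f'="?k"])
      show "\<forall>v\<in>spS B1 B2 C1 C2. ?k (?k v) = v" unfolding spS_def using i1 i2 by auto
      show "\<forall>v\<in>spS B1 C2 C1 B2. ?k (?k v) = v" unfolding spS_def using i1 i2 by auto
      show "?k ` spS B1 B2 C1 C2 \<subseteq> spS B1 C2 C1 B2" unfolding spS_def using i1 i2 by auto
      show "?k ` spS B1 C2 C1 B2 \<subseteq> spS B1 B2 C1 C2" unfolding spS_def using i1 i2 by auto
    qed
    then show ?thesis using True by simp
  next
    case False
    then have aU2: "a \<in> U2" using a by auto
    have bij: "bij_betw (h2 a) B2 C2" using tw2 aU2 unfolding twist_def by auto
    have i1: "\<And>x. x \<in> B2 \<Longrightarrow> h2 a x \<in> C2" "\<And>x. x \<in> B2 \<Longrightarrow> inv_into B2 (h2 a) (h2 a x) = x"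
      using bij unfolding bij_betw_def by (auto simp: inv_into_f_f)
    have i2: "\<And>y. y \<in> C2 \<Longrightarrow> inv_into B2 (h2 a) y \<in> B2" "\<And>y. y \<in> C2 \<Longrightarrow> h2 a (inv_into B2 (h2 a) y) = y"
      using bij unfolding bij_betw_def by (auto simp: inv_into_into f_inv_into_f)
    let ?k = "case_sum (\<lambda>(x,y). Inl (x, h2 a y)) (\<lambda>(x,y). Inr (x, inv_into B2 (h2 a) y))
        :: (nat\<times>nat) + (nat\<times>nat) \<Rightarrow> (nat\<times>nat) + (nat\<times>nat)"
    let ?k' = "case_sum (\<lambda>(x,y). Inl (x, inv_into B2 (h2 a) y)) (\<lambda>(x,y). Inr (x, h2 a y))
        :: (nat\<times>nat) + (nat\<times>nat) \<Rightarrow> (nat\<times>nat) + (nat\<times>nat)"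
    have "bij_betw ?k (spS B1 B2 C1 C2) (spS B1 C2 C1 B2)"
    proof (rule bij_betw_byWitness[where f'="?k'"])
      show "\<forall>v\<in>spS B1 B2 C1 C2. ?k' (?k v) = v" unfolding spS_def using i1 i2 by auto
      show "\<forall>v\<in>spS B1 C2 C1 B2. ?k (?k' v) = v" unfolding spS_def using i1 i2 by auto
      show "?k ` spS B1 B2 C1 C2 \<subseteq> spS B1 C2 C1 B2" unfolding spS_def using i1 i2 by auto
      show "?k' ` spS B1 C2 C1 B2 \<subseteq> spS B1 B2 C1 C2" unfolding spS_def using i1 i2 by auto
    qed
    then show ?thesis using False by simp
  qed
  fix v assume v: "v \<in> spS B1 B2 C1 C2"
  show "(if f a \<in> U1 then case_sum (\<lambda>(x,y). Inr (h1 (f a) x, y)) (\<lambda>(x,y). Inl (inv_into B1 (h1 (f a)) x, y))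
          else case_sum (\<lambda>(x,y). Inl (x, h2 (f a) y)) (\<lambda>(x,y). Inr (x, inv_into B2 (h2 (f a)) y)))
         (spF gB1 gB2 gC1 gC2 v) =
        spF gB1 gC2 gC1 gB2 ((if a \<in> U1 then case_sum (\<lambda>(x,y). Inr (h1 a x, y)) (\<lambda>(x,y). Inl (inv_into B1 (h1 a) x, y))
          else case_sum (\<lambda>(x,y). Inl (x, h2 a y)) (\<lambda>(x,y). Inr (x, inv_into B2 (h2 a) y))) v)"
  proof (cases "a \<in> U1")
    case True
    then have fa: "f a \<in> U1" using cl1 by auto
    have bij: "bij_betw (h1 a) B1 C1" and eq: "\<And>b. b \<in> B1 \<Longrightarrow> h1 (f a) (gB1 b) = gC1 (h1 a b)"
      using tw1 True unfolding twist_def by auto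
    have bijf: "bij_betw (h1 (f a)) B1 C1" using tw1 fa unfolding twist_def by auto
    have ie: "inv_into B1 (h1 (f a)) (gC1 c) = gB1 (inv_into B1 (h1 a) c)" if c: "c \<in> C1" for c
    proof -
      define b where "b = inv_into B1 (h1 a) c"
      have b: "b \<in> B1" "h1 a b = c" using bij c unfolding b_def bij_betw_def by (auto simp: inv_into_into f_inv_into_f)
      have gb: "gB1 b \<in> B1" using fB1 b unfolding is_fds_def by auto
      have "h1 (f a) (gB1 b) = gC1 c" using eq[OF b(1)] b(2) by simp
      then have "inv_into B1 (h1 (f a)) (gC1 c) = inv_into B1 (h1 (f a)) (h1 (f a) (gB1 b))" by simp
      also have "\<dots> = gB1 b" using bijf gb unfolding bij_betw_def by (simp add: inv_into_f_f)
      finally show ?thesis unfolding b_def .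
    qed
    show ?thesis using v True fa eq ie unfolding spS_def by auto
  next
    case False
    then have aU2: "a \<in> U2" using a by auto
    then have fa: "f a \<in> U2" "f a \<notin> U1" using cl2 disj by auto
    have bij: "bij_betw (h2 a) B2 C2" and eq: "\<And>b. b \<in> B2 \<Longrightarrow> h2 (f a) (gB2 b) = gC2 (h2 a b)"
      using tw2 aU2 unfolding twist_def by auto
    have bijf: "bij_betw (h2 (f a)) B2 C2" using tw2 fa unfolding twist_def by auto
    have ie: "inv_into B2 (h2 (f a)) (gC2 c) = gB2 (inv_into B2 (h2 a) c)" if c: "c \<in> C2" for c
    proof -
      define b where "b = inv_into B2 (h2 a) c"
      have b: "b \<in> B2" "h2 a b = c" using bij c unfolding b_def bij_betw_def by (auto simp: inv_into_into f_inv_into_f)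
      have gb: "gB2 b \<in> B2" using fB2 b unfolding is_fds_def by auto
      have "h2 (f a) (gB2 b) = gC2 c" using eq[OF b(1)] b(2) by simp
      then have "inv_into B2 (h2 (f a)) (gC2 c) = inv_into B2 (h2 (f a)) (h2 (f a) (gB2 b))" by simp
      also have "\<dots> = gB2 b" using bijf gb unfolding bij_betw_def by (simp add: inv_into_f_f)
      finally show ?thesis unfolding b_def .
    qed
    show ?thesis using v False fa eq ie unfolding spS_def by auto
  qed
qed

definition orb :: "('a\<Rightarrow>'a) \<Rightarrow> 'a \<Rightarrow> 'a set" where
  "orb f p = range (\<lambda>j. (f^^j) p)"

definition off :: "('a\<Rightarrow>'a) \<Rightarrow> 'a \<Rightarrow> 'a \<Rightarrow> nat" where
  "off f q y = (LEAST j. (f^^j) q = y)"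

lemma fp_add: "(f^^m) ((f^^n) x) = (f^^(m+n)) x"
  by (simp add: funpow_add)

lemma fp_comm: "(f^^m) ((f^^n) x) = (f^^n) ((f^^m) x)"
  unfolding fp_add by (simp add: add.commute)

lemma fp_pred: "0 < n \<Longrightarrow> (f^^(n-1)) (f x) = (f^^n) x"
  by (cases n) (simp_all add: funpow_swap1)

lemma pow_in: "\<forall>x\<in>S. f x \<in> S \<Longrightarrow> x \<in> S \<Longrightarrow> (f^^n) x \<in> S"
  by (induction n) auto

lemma orb_sub:
  assumes cl: "\<forall>x\<in>S. f x \<in> S" and p: "p \<in> S"
  shows "orb f p \<subseteq> S"
proof
  fix y assume "y \<in> orb f p"
  then obtain j where "y = (f^^j) p" unfolding orb_def by blast
  then show "y \<in> S" using pow_in[OF cl p, of j] by simp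
qed

lemma orb_self: "p \<in> orb f p"
  unfolding orb_def by (rule range_eqI[of _ _ 0]) simp

lemma orb_pow: "y \<in> orb f p \<Longrightarrow> (f^^k) y \<in> orb f p"
proof -
  assume "y \<in> orb f p"
  then obtain i where "y = (f^^i) p" unfolding orb_def by auto
  then have "(f^^k) y = (f^^(k+i)) p" by (simp add: funpow_add)
  then show ?thesis unfolding orb_def by auto
qed

lemma orb_f: "y \<in> orb f p \<Longrightarrow> f y \<in> orb f p"
  using orb_pow[of y f p 1] by simp

lemma periodic_mult: "(f^^n) p = p \<Longrightarrow> (f^^(n*k)) p = p"
proof (induction k)
  case 0 then show ?case by simp
next
  case (Suc k)
  have "(f^^(n * Suc k)) p = (f^^n) ((f^^(n*k)) p)" by (simp add: funpow_add)
  then show ?case using Suc by simp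
qed

lemma orb_periodic: "(f^^n) p = p \<Longrightarrow> y \<in> orb f p \<Longrightarrow> (f^^n) y = y"
proof -
  assume p: "(f^^n) p = p" and "y \<in> orb f p"
  then obtain i where y: "y = (f^^i) p" unfolding orb_def by auto
  have "(f^^n) y = (f^^i) ((f^^n) p)" unfolding y by (rule fp_comm)
  then show ?thesis using p y by simp
qed

lemma orb_eq: "(f^^n) p = p \<Longrightarrow> 0 < n \<Longrightarrow> q \<in> orb f p \<Longrightarrow> orb f q = orb f p"
proof -
  assume p: "(f^^n) p = p" and n: "0 < n" and q: "q \<in> orb f p"
  then obtain i where qi: "q = (f^^i) p" unfolding orb_def by auto
  show ?thesis
  proof
    show "orb f q \<subseteq> orb f p"
      using orb_pow[OF q] unfolding orb_def by auto
    have "i \<le> n * i" using n by simp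
    then have "(f^^(n*i - i)) q = (f^^(n*i)) p" unfolding qi fp_add by simp
    also have "\<dots> = p" using periodic_mult[OF p] .
    finally have "p \<in> orb f q" unfolding orb_def by (intro range_eqI[where x="n*i - i"]) simp
    then show "orb f p \<subseteq> orb f q"
      using orb_pow[of p f q] unfolding orb_def by auto
  qed
qed

lemma off_spec: "y \<in> orb f q \<Longrightarrow> (f^^(off f q y)) q = y"
  unfolding off_def orb_def by (rule LeastI_ex) auto

lemma off_shift:
  assumes q: "(f^^n) q = q" and n: "0 < n" and y: "y \<in> orb f q"
  shows "off f (f q) (f y) = off f q y"
proof -
  define j0 where "j0 = off f q y"
  define j1 where "j1 = off f (f q) (f y)"
  have s0: "(f^^j0) q = y" using off_spec[OF y] unfolding j0_def .
  have fj: "(f^^j0) (f q) = f y" using s0 by (simp add: funpow_swap1[symmetric])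
  then have le1: "j1 \<le> j0" unfolding j1_def off_def by (rule Least_le)
  have fy: "f y \<in> orb f (f q)" using fj unfolding orb_def by (intro range_eqI[where x="j0"]) simp
  have s1: "(f^^j1) (f q) = f y" using off_spec[OF fy] unfolding j1_def .
  have "(f^^(n-1)) ((f^^j1) (f q)) = (f^^j1) ((f^^(n-1)) (f q))"
    by (rule fp_comm)
  also have "(f^^(n-1)) (f q) = (f^^n) q" using n by (rule fp_pred)
  finally have "(f^^(n-1)) (f y) = (f^^j1) q" using s1 q by simp
  moreover have "(f^^(n-1)) (f y) = (f^^n) y" using n by (rule fp_pred)
  moreover have "(f^^n) y = y" using orb_periodic[OF q y] .
  ultimately have "(f^^j1) q = y" by simp
  then have "j0 \<le> j1" unfolding j0_def off_def by (rule Least_le)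
  then show ?thesis using le1 unfolding j0_def j1_def by simp
qed

lemma off_bound:
  assumes y: "y \<in> orb f q" and fin: "finite (orb f q)"
  shows "off f q y < card (orb f q)"
proof -
  define j where "j = off f q y"
  have sj: "(f^^j) q = y" using off_spec[OF y] unfolding j_def .
  have inj: "inj_on (\<lambda>i. (f^^i) q) {0..j}"
  proof (rule inj_onI, rule ccontr)
    fix i1 i2 assume i: "i1 \<in> {0..j}" "i2 \<in> {0..j}" "(f^^i1) q = (f^^i2) q" "i1 \<noteq> i2"
    have ex: "\<exists>a b. a < b \<and> b \<le> j \<and> (f^^a) q = (f^^b) q"
    proof (cases "i1 < i2")
      case True then show ?thesis using i by auto
    next
      case False then have "i2 < i1" using i by simp
      then show ?thesis using i by (metis atLeastAtMost_iff)
    qed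
    then obtain a b where ab: "a < b" "b \<le> j" "(f^^a) q = (f^^b) q" by blast
    have "(f^^(j - (b - a))) q = (f^^(j - b)) ((f^^a) q)"
    proof -
      have "j - (b - a) = (j - b) + a" using ab by simp
      then show ?thesis unfolding fp_add by simp
    qed
    also have "\<dots> = (f^^(j - b)) ((f^^b) q)" using ab by simp
    also have "\<dots> = (f^^j) q"
    proof -
      have "(j - b) + b = j" using ab by simp
      then show ?thesis unfolding fp_add by simp
    qed
    finally have "(f^^(j - (b - a))) q = y" using sj by simp
    then have "j \<le> j - (b - a)" unfolding j_def off_def by (rule Least_le)
    then show False using ab by simp
  qed
  have "(\<lambda>i. (f^^i) q) ` {0..j} \<subseteq> orb f q" unfolding orb_def by auto
  from card_inj_on_le[OF inj this fin] have "Suc j \<le> card (orb f q)" by simp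
  then show ?thesis unfolding j_def by simp
qed

lemma off_bij:
  assumes fin: "finite (orb f q)"
  shows "bij_betw (off f q) (orb f q) {0..<card (orb f q)}"
proof -
  have inj: "inj_on (off f q) (orb f q)"
  proof (rule inj_onI)
    fix x y assume xy: "x \<in> orb f q" "y \<in> orb f q" "off f q x = off f q y"
    have "x = (f^^(off f q x)) q" using off_spec[OF xy(1)] by (rule sym)
    also have "\<dots> = (f^^(off f q y)) q" using xy(3) by (simp only:)
    also have "\<dots> = y" using off_spec[OF xy(2)] .
    finally show "x = y" .
  qed
  have sub: "off f q ` orb f q \<subseteq> {0..<card (orb f q)}" using off_bound[OF _ fin] by auto
  have "card (off f q ` orb f q) = card {0..<card (orb f q)}" using card_image[OF inj] by simp
  then have "off f q ` orb f q = {0..<card (orb f q)}" using card_subset_eq[OF _ sub] by simp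
  then show ?thesis using inj unfolding bij_betw_def by simp
qed

lemma eventually_periodic:
  assumes S: "is_fds S f" and x: "x \<in> S"
  shows "\<exists>n>0. (f^^n) ((f^^card S) x) = (f^^card S) x"
proof -
  have cl: "\<forall>y\<in>S. f y \<in> S" and fin: "finite S" using S unfolding is_fds_def by auto
  let ?K = "card S"
  have "\<not> inj_on (\<lambda>i. (f^^i) x) {0..?K}"
  proof
    assume inj: "inj_on (\<lambda>i. (f^^i) x) {0..?K}"
    have "(\<lambda>i. (f^^i) x) ` {0..?K} \<subseteq> S" using pow_in[OF cl x] by auto
    from card_inj_on_le[OF inj this fin] show False by simp
  qed
  then obtain i j where ij: "i \<in> {0..?K}" "j \<in> {0..?K}" "i \<noteq> j" "(f^^i) x = (f^^j) x"
    unfolding inj_on_def by blast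
  then obtain a b where ab: "a < b" "b \<le> ?K" "(f^^a) x = (f^^b) x"
    by (metis atLeastAtMost_iff linorder_neqE_nat)
  have "(f^^(b - a)) ((f^^?K) x) = (f^^(?K - a)) ((f^^b) x)"
  proof -
    have "(b - a) + ?K = (?K - a) + b" using ab by simp
    then show ?thesis unfolding fp_add by simp
  qed
  also have "\<dots> = (f^^(?K - a)) ((f^^a) x)" using ab by simp
  also have "\<dots> = (f^^?K) x"
  proof -
    have "(?K - a) + a = ?K" using ab by simp
    then show ?thesis unfolding fp_add by simp
  qed
  finally show ?thesis using ab by (intro exI[of _ "b - a"]) simp
qed

lemma base_twist:
  assumes S: "is_fds S f" and nofix: "\<forall>s\<in>S. f s \<noteq> s" and US: "U \<subseteq> S" and a: "a \<in> U"
  shows "twist {x\<in>U. (f^^card S) x \<in> orb f ((f^^card S) a)} f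
           (orb f ((f^^card S) a)) f {0..<card (orb f ((f^^card S) a))} id
           (\<lambda>x y. off f ((f^^card S) x) y)"
    and "is_fds (orb f ((f^^card S) a)) f"
    and "is_fds {0..<card (orb f ((f^^card S) a))} id"
    and "fixc (orb f ((f^^card S) a)) f \<noteq> fixc {0..<card (orb f ((f^^card S) a))} id"
proof -
  define K where "K = card S"
  define p where "p = (f^^K) a"
  have cl: "\<forall>x\<in>S. f x \<in> S" and fin: "finite S" using S unfolding is_fds_def by auto
  have aS: "a \<in> S" using US a by auto
  have pS: "p \<in> S" unfolding p_def using pow_in[OF cl aS] .
  obtain n0 where n0: "n0 > 0" "(f^^n0) p = p" using eventually_periodic[OF S aS] unfolding p_def K_def by blast
  have orbS: "orb f p \<subseteq> S" using orb_sub[OF cl pS] .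
  have finO: "finite (orb f p)" using finite_subset[OF orbS fin] .
  show "twist {x\<in>U. (f^^card S) x \<in> orb f ((f^^card S) a)} f
           (orb f ((f^^card S) a)) f {0..<card (orb f ((f^^card S) a))} id
           (\<lambda>x y. off f ((f^^card S) x) y)"
    unfolding K_def[symmetric] p_def[symmetric] twist_def
  proof (intro ballI conjI)
    fix x assume x: "x \<in> {x\<in>U. (f^^K) x \<in> orb f p}"
    then have xS: "x \<in> S" and qo: "(f^^K) x \<in> orb f p" using US by auto
    define q where "q = (f^^K) x"
    obtain n where n: "n > 0" "(f^^n) q = q" using eventually_periodic[OF S xS] unfolding q_def K_def by blast
    have oq: "orb f q = orb f p" using orb_eq[OF n0(2) n0(1)] qo unfolding q_def by simp
    have "finite (orb f q)" using finO oq by simp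
    then have "bij_betw (off f q) (orb f q) {0..<card (orb f q)}" by (rule off_bij)
    then have "bij_betw (off f q) (orb f p) {0..<card (orb f p)}" by (simp only: oq)
    then show "bij_betw (off f ((f^^K) x)) (orb f p) {0..<card (orb f p)}"
      unfolding q_def .
    fix y assume y: "y \<in> orb f p"
    have "(f^^K) (f x) = f q" unfolding q_def by (simp add: funpow_swap1[symmetric])
    then have "off f ((f^^K) (f x)) (f y) = off f (f q) (f y)" by simp
    also have "\<dots> = off f q y" using off_shift[OF n(2) n(1)] y oq by simp
    finally show "off f ((f^^K) (f x)) (f y) = id (off f ((f^^K) x) y)" unfolding q_def by simp
  qed
  show "is_fds (orb f ((f^^card S) a)) f"
    unfolding K_def[symmetric] p_def[symmetric] is_fds_def using finO by (auto intro: orb_f)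
  show "is_fds {0..<card (orb f ((f^^card S) a))} id" unfolding is_fds_def by simp
  have e0: "{y \<in> orb f p. f y = y} = {}" using orbS nofix by auto
  have z: "fixc (orb f p) f = 0" unfolding fixc_def e0 by simp
  have "p \<in> orb f p" by (rule orb_self)
  then have "card (orb f p) \<noteq> 0" using finO by auto
  then have nz: "fixc {0..<card (orb f p)} id \<noteq> 0" unfolding fixc_def by simp
  show "fixc (orb f ((f^^card S) a)) f \<noteq> fixc {0..<card (orb f ((f^^card S) a))} id"
    using z nz unfolding K_def[symmetric] p_def[symmetric] by simp
qed

lemma closed_W:
  assumes "\<forall>x\<in>U. f x \<in> U"
  shows "\<forall>x\<in>{x\<in>U. (f^^K) x \<in> orb f p}. f x \<in> {x\<in>U. (f^^K) x \<in> orb f p}"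
proof
  fix x assume x: "x \<in> {x\<in>U. (f^^K) x \<in> orb f p}"
  have "(f^^K) (f x) = f ((f^^K) x)" by (simp add: funpow_swap1[symmetric])
  then have "(f^^K) (f x) \<in> orb f p" using orb_f x by auto
  then show "f x \<in> {x\<in>U. (f^^K) x \<in> orb f p}" using assms x by auto
qed

lemma closed_UW:
  assumes S: "is_fds S f" and US: "U \<subseteq> S" and cl: "\<forall>x\<in>U. f x \<in> U"
  shows "\<forall>x\<in>U - {x\<in>U. (f^^card S) x \<in> orb f p}. f x \<in> U - {x\<in>U. (f^^card S) x \<in> orb f p}"
proof
  fix x assume x: "x \<in> U - {x\<in>U. (f^^card S) x \<in> orb f p}"
  then have xU: "x \<in> U" and nx: "(f^^card S) x \<notin> orb f p" by auto
  obtain n where n: "n > 0" "(f^^n) ((f^^card S) x) = (f^^card S) x"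
    using eventually_periodic[OF S] xU US by blast
  have "(f^^card S) (f x) \<notin> orb f p"
  proof
    assume a: "(f^^card S) (f x) \<in> orb f p"
    have "(f^^card S) (f x) = f ((f^^card S) x)" by (simp add: funpow_swap1[symmetric])
    then have "(f^^(n-1)) ((f^^card S) (f x)) = (f^^n) ((f^^card S) x)" using fp_pred[OF n(1)] by simp
    then have "(f^^card S) x = (f^^(n-1)) ((f^^card S) (f x))" using n by simp
    then show False using orb_pow[OF a, of "n-1"] nx by simp
  qed
  then show "f x \<in> U - {x\<in>U. (f^^card S) x \<in> orb f p}" using cl xU by auto
qed

lemma ind:
  assumes S: "is_fds S f" and nofix: "\<forall>s\<in>S. f s \<noteq> s"
  shows "U \<subseteq> S \<Longrightarrow> (\<forall>x\<in>U. f x \<in> U) \<Longrightarrow> \<exists>(B::nat set) gB (C::nat set) gC h.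
     is_fds B gB \<and> is_fds C gC \<and> twist U f B gB C gC h \<and> fixc B gB \<noteq> fixc C gC"
proof (induction "card U" arbitrary: U rule: less_induct)
  case less
  have fin: "finite S" using S unfolding is_fds_def by auto
  show ?case
  proof (cases "U = {}")
    case True
    have "is_fds ({}::nat set) id" "is_fds ({0}::nat set) id" unfolding is_fds_def by auto
    moreover have "twist U f ({}::nat set) id ({0}::nat set) id (\<lambda>a b. b)" using True unfolding twist_def by simp
    moreover have "fixc ({}::nat set) id \<noteq> fixc ({0}::nat set) id" unfolding fixc_def by simp
    ultimately show ?thesis by blast
  next
    case False
    then obtain a where a: "a \<in> U" by blast
    define W where "W = {x\<in>U. (f^^card S) x \<in> orb f ((f^^card S) a)}"
    have finU: "finite U" using finite_subset[OF less.prems(1) fin] .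
    have aW: "a \<in> W" unfolding W_def using a orb_self by auto
    have WU: "W \<subseteq> U" unfolding W_def by auto
    have clW: "\<forall>x\<in>W. f x \<in> W" unfolding W_def using closed_W[OF less.prems(2)] .
    have clUW: "\<forall>x\<in>U - W. f x \<in> U - W" unfolding W_def using closed_UW[OF S less.prems(1,2)] .
    have "U - W \<subset> U" using aW a by blast
    then have lt: "card (U - W) < card U" by (rule psubset_card_mono[OF finU])
    have UWS: "U - W \<subseteq> S" using less.prems(1) by blast
    obtain B2 :: "nat set" and gB2 and C2 :: "nat set" and gC2 and h2 where
      ih: "is_fds B2 gB2" "is_fds C2 gC2" "twist (U-W) f B2 gB2 C2 gC2 h2" "fixc B2 gB2 \<noteq> fixc C2 gC2"
      using less.hyps[OF lt UWS clUW] by blast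
    note bt = base_twist[OF S nofix less.prems(1) a]
    obtain B1 :: "nat set" and gB1 and C1 :: "nat set" and gC1 and h1 where
      b1: "is_fds B1 gB1" "is_fds C1 gC1" "twist W f B1 gB1 C1 gC1 h1"
          "fixc B1 gB1 = fixc (orb f ((f^^card S) a)) f"
          "fixc C1 gC1 = fixc {0..<card (orb f ((f^^card S) a))} id"
      using twist_to_nat[OF bt(1)[folded W_def] bt(2) bt(3)] by blast
    have d1: "fixc B1 gB1 \<noteq> fixc C1 gC1" using b1(4,5) bt(4) by simp
    have disj: "W \<inter> (U - W) = {}" by blast
    have cl1: "\<And>x. x \<in> W \<Longrightarrow> f x \<in> W" using clW by blast
    have cl2: "\<And>x. x \<in> U - W \<Longrightarrow> f x \<in> U - W" using clUW by blast
    have WUU: "W \<union> (U - W) = U" using WU by blast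
    note tw = combine[OF b1(3) ih(3) cl1 cl2 disj b1(1) b1(2) ih(1) ih(2), unfolded WUU]
    have fdsB: "is_fds (spS B1 B2 C1 C2) (spF gB1 gB2 gC1 gC2)" by (rule sp_fds[OF b1(1) ih(1) b1(2) ih(2)])
    have fdsC: "is_fds (spS B1 C2 C1 B2) (spF gB1 gC2 gC1 gB2)" by (rule sp_fds[OF b1(1) ih(2) b1(2) ih(1)])
    have fins: "finite B1" "finite C1" "finite B2" "finite C2" using b1(1,2) ih(1,2) unfolding is_fds_def by auto
    have fx: "fixc (spS B1 B2 C1 C2) (spF gB1 gB2 gC1 gC2) \<noteq> fixc (spS B1 C2 C1 B2) (spF gB1 gC2 gC1 gB2)"
      unfolding sp_fixc[OF fins(1) fins(3) fins(2) fins(4)] sp_fixc[OF fins(1) fins(4) fins(2) fins(3)]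
      using nat_ineq[OF d1 ih(4)] by simp
    obtain B :: "nat set" and gB and C :: "nat set" and gC and h where
      r: "is_fds B gB" "is_fds C gC" "twist U f B gB C gC h"
         "fixc B gB = fixc (spS B1 B2 C1 C2) (spF gB1 gB2 gC1 gC2)"
         "fixc C gC = fixc (spS B1 C2 C1 B2) (spF gB1 gC2 gC1 gB2)"
      using twist_to_nat[OF tw fdsB fdsC] by blast
    have "fixc B gB \<noteq> fixc C gC" using r(4,5) fx by simp
    then show ?thesis using r(1-3) by blast
  qed
qed

theorem mainTheorem1:
  fixes S :: "'a set" and f :: "'a \<Rightarrow> 'a"
  assumes "is_fds S f"
  shows "cancellative S f \<longleftrightarrow> (\<exists>s\<in>S. f s = s)"
proof
  assume canc: "cancellative S f"
  show "\<exists>s\<in>S. f s = s"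
  proof (rule ccontr)
    assume "\<not> (\<exists>s\<in>S. f s = s)"
    then have nofix: "\<forall>s\<in>S. f s \<noteq> s" by blast
    have clS: "\<forall>x\<in>S. f x \<in> S" using assms unfolding is_fds_def by auto
    obtain B :: "nat set" and gB and C :: "nat set" and gC and h where
      r: "is_fds B gB" "is_fds C gC" "twist S f B gB C gC h" "fixc B gB \<noteq> fixc C gC"
      using ind[OF assms nofix, of S] clS by blast
    have iso: "fds_iso (fds_prod_set S B) (fds_prod_fun f gB) (fds_prod_set S C) (fds_prod_fun f gC)"
      unfolding fds_prod_set_def by (rule twist_iso[OF r(3)])
    have "\<forall>(SB :: nat set) gB (SC :: nat set) gC.
        is_fds SB gB \<longrightarrow> is_fds SC gC \<longrightarrow>
        fds_iso (fds_prod_set S SB) (fds_prod_fun f gB) (fds_prod_set S SC) (fds_prod_fun f gC) \<longrightarrow>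
        fds_iso SB gB SC gC" using canc unfolding cancellative_def .
    then have "fds_iso B gB C gC" using r(1,2) iso by blast
    then have "fixc B gB = fixc C gC" by (rule iso_fixc[OF r(1)])
    then show False using r(4) by simp
  qed
next
  assume "\<exists>s\<in>S. f s = s"
  then obtain s where "s \<in> S" "f s = s" by blast
  then show "cancellative S f" by (rule canc_if_fix[OF assms])
qed


end
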